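(* Let $\mathcal{M}=(\Sigma,\Gamma,\mathcal{H},U,M)$ be a real QMM (all matrices $U_\sigma$ and $M_\gamma$ have real entries with respect to a fixed basis), let $n=\dim\mathcal{H}$, and let $\rho_s,\rho_t$ be density operators on $\mathcal{H}$ (not necessarily real). Then for every $k\in\mathbb{N}$, $\rho_s\sim_k\rho_t\iff\rho_s\sim_k^{\frac12 n(n+1)-1}\rho_t$, and $\rho_s\sim\rho_t\iff\rho_s\sim^{\frac12 n(n+1)-1}\rho_t$.
   Context: A quantum Mealy machine (QMM) is a tuple $\mathcal{M}=(\Sigma,\Gamma,\mathcal{H},U,M)$ where $\Sigma,\Gamma$ are finite alphabets, $\mathcal{H}$ a finite-dimensional complex Hilbert space, $U=\{U_\sigma\}_{\sigma\in\Sigma}$ unitary operators on $\mathcal{H}$, $M=\{M_\gamma\}_{\gamma\in\Gamma}$ linear operators with $\sum_\gamma M_\gamma^\dagger M_\gamma=I$. For a word $a$, $|a|$ is its length, $a[l:r]=a[l]\cdots a[r]$ (empty if $l>r$), $U_a=U_{a[|a|]}\cdots U_{a[1]}$, $U_\epsilon=I$. A scheduler for $a\in\Sigma^*$ is a finite non-decreasing integer sequence $\mathcal{S}=(s_1\le\dots\le s_{|\mathcal{S}|})$ in $\{0,\dots,|a|\}$ (possibly empty). With $s_0=0$, $s_{|\mathcal{S}|+1}=|a|$, $a_i=a[s_{i-1}+1:s_i]$. For $b\in\Gamma^{|\mathcal{S}|}$, $V_{b|a,\mathcal{S}}=U_{a_{|\mathcal{S}|+1}}M_{b_{|\mathcal{S}|}}U_{a_{|\mathcal{S}|}}\cdots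 M_{b_1}U_{a_1}$ and $\Pr^{\mathcal{M}}_\rho(b|a,\mathcal{S})=\operatorname{tr}(V_{b|a,\mathcal{S}}\rho V_{b|a,\mathcal{S}}^\dagger)$. $\rho_s\sim\rho_t$ means $\Pr_{\rho_s}^{\mathcal{M}}(b|a,\mathcal{S})=\Pr_{\rho_t}^{\mathcal{M}}(b|a,\mathcal{S})$ for all $a,\mathcal{S},b$; $\sim_k$ restricts to $|\mathcal{S}|\le k$; $\sim^m$ restricts to $|a|+|\mathcal{S}|\le m$; $\sim^m_k$ restricts to both $|\mathcal{S}|\le k$ and $|a|+|\mathcal{S}|\le m$. *)

theory Defs
  imports "HOL-Analysis.Analysis"
begin

text \<open>Operators on the n-dimensional Hilbert space C^n are complex n x n matrices
  indexed by a finite type 'n (n = CARD('n)). Input/output alphabets are finite types.\<close>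

type_synonym 'n cmat = "complex ^ 'n ^ 'n"

definition cadj :: "('n::finite) cmat \<Rightarrow> 'n cmat" where
  "cadj A = (\<chi> i j. cnj (A $ j $ i))"

definition is_qmm :: "('s \<Rightarrow> ('n::finite) cmat) \<Rightarrow> ('g::finite \<Rightarrow> 'n cmat) \<Rightarrow> bool" where
  "is_qmm U M \<longleftrightarrow>
     (\<forall>\<sigma>. U \<sigma> ** cadj (U \<sigma>) = mat 1 \<and> cadj (U \<sigma>) ** U \<sigma> = mat 1) \<and>
     (\<Sum>\<gamma>\<in>UNIV. cadj (M \<gamma>) ** M \<gamma>) = mat 1"

definition real_qmm :: "('s \<Rightarrow> ('n::finite) cmat) \<Rightarrow> ('g::finite \<Rightarrow> 'n cmat) \<Rightarrow> bool" where
  "real_qmm U M \<longleftrightarrow> is_qmm U M \<and>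
     (\<forall>\<sigma> i j. Im (U \<sigma> $ i $ j) = 0) \<and> (\<forall>\<gamma> i j. Im (M \<gamma> $ i $ j) = 0)"

definition density_op :: "('n::finite) cmat \<Rightarrow> bool" where
  "density_op \<rho> \<longleftrightarrow> cadj \<rho> = \<rho> \<and>
     (\<forall>x :: complex ^ 'n. 0 \<le> Re (\<Sum>i\<in>UNIV. cnj (x $ i) * (\<rho> *v x) $ i)) \<and>
     trace \<rho> = 1"

text \<open>U_a = U_{a[|a|]} ... U_{a[1]} (first letter applied first).\<close>
definition U_word :: "('s \<Rightarrow> ('n::finite) cmat) \<Rightarrow> 's list \<Rightarrow> 'n cmat" where
  "U_word U a = fold (\<lambda>\<sigma> acc. U \<sigma> ** acc) a (mat 1)"

text \<open>vop_aux U M a p S b: the operator for the part of the run after position p, where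
  S lists the remaining measurement positions and b the corresponding outcomes.\<close>
fun vop_aux :: "('s \<Rightarrow> ('n::finite) cmat) \<Rightarrow> ('g \<Rightarrow> 'n cmat) \<Rightarrow> 's list \<Rightarrow> nat
                 \<Rightarrow> nat list \<Rightarrow> 'g list \<Rightarrow> 'n cmat" where
  "vop_aux U M a p (s # S) (g # b) =
     vop_aux U M a s S b ** M g ** U_word U (take (s - p) (drop p a))"
| "vop_aux U M a p _ _ = U_word U (drop p a)"

text \<open>V_{b|a,S} = U_{a_{|S|+1}} M_{b_|S|} U_{a_|S|} ... M_{b_1} U_{a_1}.\<close>
definition vop :: "('s \<Rightarrow> ('n::finite) cmat) \<Rightarrow> ('g \<Rightarrow> 'n cmat) \<Rightarrow> 's list \<Rightarrow> nat list
                 \<Rightarrow> 'g list \<Rightarrow> 'n cmat" where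
  "vop U M a S b = vop_aux U M a 0 S b"

definition prob :: "('s \<Rightarrow> ('n::finite) cmat) \<Rightarrow> ('g \<Rightarrow> 'n cmat) \<Rightarrow> 'n cmat \<Rightarrow> 'g list
                 \<Rightarrow> 's list \<Rightarrow> nat list \<Rightarrow> complex" where
  "prob U M \<rho> b a S = trace (vop U M a S b ** \<rho> ** cadj (vop U M a S b))"

definition scheduler :: "'s list \<Rightarrow> nat list \<Rightarrow> bool" where
  "scheduler a S \<longleftrightarrow> sorted S \<and> (\<forall>s\<in>set S. s \<le> length a)"

definition equiv_on :: "('s \<Rightarrow> ('n::finite) cmat) \<Rightarrow> ('g \<Rightarrow> 'n cmat)
     \<Rightarrow> ('s list \<Rightarrow> nat list \<Rightarrow> bool) \<Rightarrow> 'n cmat \<Rightarrow> 'n cmat \<Rightarrow> bool" where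
  "equiv_on U M P \<rho>s \<rho>t \<longleftrightarrow>
     (\<forall>a S b. scheduler a S \<longrightarrow> length b = length S \<longrightarrow> P a S \<longrightarrow>
        prob U M \<rho>s b a S = prob U M \<rho>t b a S)"

definition sim where "sim U M = equiv_on U M (\<lambda>a S. True)"
definition sim_k where "sim_k U M k = equiv_on U M (\<lambda>a S. length S \<le> k)"
definition sim_m where "sim_m U M m = equiv_on U M (\<lambda>a S. length a + length S \<le> m)"
definition sim_km where
  "sim_km U M k m = equiv_on U M (\<lambda>a S. length S \<le> k \<and> length a + length S \<le> m)"

end

theory Submission
  imports Defs
begin


lemma span_strict_dim:
  fixes S T :: "'v::euclidean_space set"
  assumes "span S \<subseteq> span T" "span S \<noteq> span T"
  shows "dim S < dim T"
proof (rule ccontr)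
  assume "\<not> dim S < dim T"
  hence "dim (span T) \<le> dim (span S)" by (simp add: dim_span)
  from dim_eq_span[OF assms(1) this] assms(2) show False by (simp add: span_span)
qed

lemma abstract_chain:
  fixes G :: "nat \<Rightarrow> nat \<Rightarrow> 'v::euclidean_space set"
  assumes m1: "\<And>l j. G l j \<subseteq> G l (Suc j)"
    and m2: "\<And>l j. G l j \<subseteq> G (Suc l) j"
    and z: "\<And>j. G 0 j \<subseteq> span (G 0 0)"
    and st: "\<And>l j. span (G (Suc l) j) = span (G (Suc l) (Suc j)) \<Longrightarrow>
                 span (G l j) = span (G l (Suc j)) \<Longrightarrow>
                 G (Suc l) (Suc (Suc j)) \<subseteq> span (G (Suc l) (Suc j))"
    and d: "\<And>l j. dim (G l j) \<le> N"
    and ne: "\<And>l j. 1 \<le> dim (G l j)"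
  shows "G l j \<subseteq> span (G l (N - 1))"
proof -
  have mono: "span (G l j) \<subseteq> span (G l j')" if "j \<le> j'" for l j j'
    using that
  proof (induction j' rule: dec_induct)
    case base then show ?case by simp
  next
    case (step i) then show ?case using m1[of l i] span_mono by blast
  qed
  define stable where "stable l j \<longleftrightarrow> (\<forall>j'\<ge>j. span (G l j') = span (G l j))" for l j
  have stable_from: "stable l j" if "\<And>i. span (G l (j + i)) = span (G l (Suc (j + i)))" for l j
  proof -
    have "span (G l (j + i)) = span (G l j)" for i
    proof (induction i)
      case 0 then show ?case by simp
    next
      case (Suc i) then show ?case using that[of i] by (metis add_Suc_right)
    qed
    then show ?thesis unfolding stable_def
      by (metis le_add_diff_inverse)
  qed
  have lift: "stable (Suc l) j"
    if sl: "stable l j" and e: "span (G (Suc l) j) = span (G (Suc l) (Suc j))" for l j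
  proof (rule stable_from)
    fix i show "span (G (Suc l) (j + i)) = span (G (Suc l) (Suc (j + i)))"
    proof (induction i)
      case 0 then show ?case using e by simp
    next
      case (Suc i)
      have a: "span (G l (j + i)) = span (G l (Suc (j + i)))"
        using sl unfolding stable_def by (metis le_add1 le_SucI)
      have "G (Suc l) (Suc (Suc (j + i))) \<subseteq> span (G (Suc l) (Suc (j + i)))"
        using st[OF Suc.IH a] .
      hence "span (G (Suc l) (Suc (Suc (j + i)))) \<subseteq> span (G (Suc l) (Suc (j + i)))"
        by (simp add: span_minimal)
      moreover have "span (G (Suc l) (Suc (j + i))) \<subseteq> span (G (Suc l) (Suc (Suc (j + i))))"
        using mono by simp
      ultimately show ?case by simp
    qed
  qed
  have C: "stable l j \<or> Suc j \<le> dim (G l j)" for l j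
  proof (induction l arbitrary: j)
    case 0
    have "stable 0 j" unfolding stable_def
    proof (intro allI impI)
      fix j' assume "j \<le> j'"
      have "span (G 0 j') = span (G 0 0)"
        using span_minimal[OF z[of j'] subspace_span] mono[of 0 j' 0] by blast
      moreover have "span (G 0 j) = span (G 0 0)"
        using span_minimal[OF z[of j] subspace_span] mono[of 0 j 0] by blast
      ultimately show "span (G 0 j') = span (G 0 j)" by simp
    qed
    then show ?case by simp
  next
    case (Suc l)
    note IHl = Suc.IH
    show ?case
    proof (induction j)
      case 0 then show ?case using ne by simp
    next
      case (Suc j)
      show ?case
      proof (cases "stable (Suc l) j")
        case True
        then have "stable (Suc l) (Suc j)" unfolding stable_def
          by (metis Suc_leD le_SucI order_refl)
        then show ?thesis by simp
      next
        case False
        with Suc.IH have dj: "Suc j \<le> dim (G (Suc l) j)" by simp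
        show ?thesis
        proof (cases "span (G (Suc l) j) = span (G (Suc l) (Suc j))")
          case False
          have "dim (G (Suc l) j) < dim (G (Suc l) (Suc j))"
            by (rule span_strict_dim) (use mono[of j "Suc j" "Suc l"] False in auto)
          with dj show ?thesis by simp
        next
          case eq: True
          have big: "Suc (Suc j) \<le> dim (G l (Suc j))"
          proof -
            have "stable l (Suc j) \<or> Suc (Suc j) \<le> dim (G l (Suc j))" using IHl .
            moreover have "Suc (Suc j) \<le> dim (G l (Suc j))" if sl: "stable l (Suc j)"
            proof (cases "span (G l j) = span (G l (Suc j))")
              case True
              have "stable l j" unfolding stable_def
              proof (intro allI impI)
                fix j' assume "j \<le> j'"
                then consider "j' = j" | "Suc j \<le> j'" by (cases "j' = j") auto
                then show "span (G l j') = span (G l j)"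
                proof cases
                  case 1 then show ?thesis by simp
                next
                  case 2
                  have "span (G l j') = span (G l (Suc j))" using sl 2 unfolding stable_def by blast
                  with True show ?thesis by simp
                qed
              qed
              have "stable (Suc l) j" by (rule lift[OF \<open>stable l j\<close> eq])
              with \<open>\<not> stable (Suc l) j\<close> show ?thesis by simp
            next
              case False
              have lt: "dim (G l j) < dim (G l (Suc j))"
                by (rule span_strict_dim) (use mono[of j "Suc j" l] False in auto)
              have "stable l j \<or> Suc j \<le> dim (G l j)" using IHl .
              moreover have "\<not> stable l j"
              proof
                assume "stable l j"
                then have "span (G l (Suc j)) = span (G l j)" unfolding stable_def by (metis le_SucI order.refl)
                with False show False by simp
              qed
              ultimately show ?thesis using lt by simp
            qed
            ultimately show ?thesis by (elim disjE) auto
          qed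
          have "dim (G l (Suc j)) \<le> dim (G (Suc l) (Suc j))"
            by (rule dim_subset[OF m2])
          with big show ?thesis by simp
        qed
      qed
    qed
  qed
  have N1: "1 \<le> N" using ne[of l 0] d[of l 0] by simp
  show ?thesis
  proof (cases "j \<le> N - 1")
    case True
    then show ?thesis using mono[of j "N - 1" l] span_superset by blast
  next
    case False
    then have jle: "N - 1 \<le> j" by simp
    have "span (G l j) = span (G l (N - 1))"
    proof (cases "stable l (N - 1)")
      case True
      then show ?thesis using jle unfolding stable_def by blast
    next
      case False
      with C[of l "N - 1"] have dN: "N \<le> dim (G l (N - 1))" using N1 by simp
      have sub: "G l (N - 1) \<subseteq> span (G l j)"
        using mono[OF jle, of l] span_superset by blast
      have "dim (span (G l j)) \<le> dim (G l (N - 1))"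
        using d[of l j] dN by (simp add: dim_span)
      from dim_eq_span[OF sub this] show ?thesis by (simp add: span_span)
    qed
    then show ?thesis using span_superset by blast
  qed
qed



lemma fold_U:
  fixes U :: "'s \<Rightarrow> 'n::finite cmat" and A :: "'n cmat"
  shows "fold (\<lambda>\<sigma> acc. U \<sigma> ** acc) a A = U_word U a ** A"
proof (induction a arbitrary: A)
  case Nil then show ?case by (simp add: U_word_def matrix_mul_lid)
next
  case (Cons x xs)
  have "U_word U (x # xs) = fold (\<lambda>\<sigma> acc. U \<sigma> ** acc) xs (U x ** mat 1)"
    by (simp add: U_word_def)
  also have "\<dots> = U_word U xs ** (U x ** mat 1)" using Cons.IH by simp
  finally have "U_word U (x # xs) = U_word U xs ** (U x ** mat 1)" .
  then show ?case using Cons.IH[of "U x ** A"] by (simp add: matrix_mul_rid matrix_mul_assoc)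
qed

lemma U_word_Nil[simp]: "U_word U [] = mat 1"
  by (simp add: U_word_def)

lemma U_word_Cons: "U_word U (\<sigma> # a) = U_word U a ** U \<sigma>"
proof -
  have "U_word U (\<sigma> # a) = fold (\<lambda>\<sigma> acc. U \<sigma> ** acc) a (U \<sigma> ** mat 1)"
    by (simp add: U_word_def)
  also have "\<dots> = U_word U a ** U \<sigma>" by (simp add: fold_U matrix_mul_rid)
  finally show ?thesis .
qed

lemma vop_aux_shift:
  "vop_aux U M (\<sigma> # a) (Suc p) (map Suc S) b = vop_aux U M a p S b"
  by (induction U M a p S b rule: vop_aux.induct) auto

lemma vop0_shift:
  "vop_aux U M (\<sigma> # a) 0 (map Suc S) b = vop_aux U M a 0 S b ** U \<sigma>"
proof (cases "S = [] \<or> b = []")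
  case True
  then show ?thesis by (cases S; cases b) (auto simp: U_word_Cons)
next
  case False
  then obtain s S' g b' where "S = s # S'" "b = g # b'" by (cases S; cases b) auto
  then show ?thesis
    by (simp add: vop_aux_shift U_word_Cons matrix_mul_assoc)
qed

lemma vop_meas0: "vop_aux U M a 0 (0 # S) (g # b) = vop_aux U M a 0 S b ** M g"
  by (simp add: matrix_mul_rid)

lemma cadj_mult: "cadj (A ** B) = cadj B ** cadj A"
  by (simp add: cadj_def matrix_matrix_mult_def vec_eq_iff cnj_sum mult.commute)

lemma cadj_mat1[simp]: "cadj (mat 1 :: 'n::finite cmat) = mat 1"
  by (simp add: cadj_def mat_def vec_eq_iff)

lemma U_word_unitary:
  assumes "is_qmm U M"
  shows "cadj (U_word U a) ** U_word U a = mat 1"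
proof (induction a)
  case Nil then show ?case by (simp add: matrix_mul_lid)
next
  case (Cons x xs)
  have u: "cadj (U x) ** U x = mat 1" using assms unfolding is_qmm_def by blast
  have "cadj (U_word U (x # xs)) ** U_word U (x # xs)
        = cadj (U x) ** (cadj (U_word U xs) ** U_word U xs) ** U x"
    by (simp add: U_word_Cons cadj_mult matrix_mul_assoc)
  also have "\<dots> = mat 1" using Cons.IH u by (simp add: matrix_mul_rid)
  finally show ?case .
qed

definition Obs :: "'n::finite cmat \<Rightarrow> 'n cmat" where "Obs V = cadj V ** V"
definition Ad :: "'n::finite cmat \<Rightarrow> 'n cmat \<Rightarrow> 'n cmat" where "Ad A X = cadj A ** X ** A"

definition Gs :: "('s \<Rightarrow> 'n::finite cmat) \<Rightarrow> ('g \<Rightarrow> 'n cmat) \<Rightarrow> nat \<Rightarrow> nat \<Rightarrow> 'n cmat set" where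
  "Gs U M l j = {Obs (vop U M a S b) | a S b. scheduler a S \<and> length b = length S \<and>
      length S \<le> l \<and> length a + length S \<le> j}"

lemma Obs_mult: "Obs (V ** A) = Ad A (Obs V)"
  by (simp add: Obs_def Ad_def cadj_mult matrix_mul_assoc)

lemma R1: "mat 1 \<in> Gs U M l j"
proof -
  have "Obs (vop U M [] [] []) = mat 1"
    by (simp add: vop_def Obs_def matrix_mul_lid)
  moreover have "scheduler ([] :: 's list) []" by (simp add: scheduler_def)
  ultimately show ?thesis unfolding Gs_def by force
qed

lemma R2: assumes "Y \<in> Gs U M l j" shows "Ad (U \<sigma>) Y \<in> Gs U M l (Suc j)"
proof -
  obtain a S b where Y: "Y = Obs (vop U M a S b)" "scheduler a S" "length b = length S"
    "length S \<le> l" "length a + length S \<le> j"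
    using assms unfolding Gs_def by blast
  have "Obs (vop U M (\<sigma> # a) (map Suc S) b) = Ad (U \<sigma>) Y"
    using Y(1) by (simp add: vop_def vop0_shift Obs_mult)
  moreover have "scheduler (\<sigma> # a) (map Suc S)"
    using Y(2) by (auto simp: scheduler_def sorted_map)
  ultimately show ?thesis using Y unfolding Gs_def
    by (intro CollectI exI[of _ "\<sigma> # a"] exI[of _ "map Suc S"] exI[of _ b]) auto
qed

lemma R3: assumes "Y \<in> Gs U M l j" shows "Ad (M g) Y \<in> Gs U M (Suc l) (Suc j)"
proof -
  obtain a S b where Y: "Y = Obs (vop U M a S b)" "scheduler a S" "length b = length S"
    "length S \<le> l" "length a + length S \<le> j"
    using assms unfolding Gs_def by blast
  have "Obs (vop U M a (0 # S) (g # b)) = Ad (M g) Y"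
    using Y(1) by (simp add: vop_def matrix_mul_rid Obs_mult)
  moreover have "scheduler a (0 # S)"
    using Y(2) by (auto simp: scheduler_def)
  ultimately show ?thesis using Y unfolding Gs_def
    by (intro CollectI exI[of _ a] exI[of _ "0 # S"] exI[of _ "g # b"]) auto
qed

lemma Obs_nil: assumes "is_qmm U M" shows "Obs (vop U M a [] b) = mat 1"
  using U_word_unitary[OF assms] by (simp add: vop_def Obs_def)

lemma R0: assumes "is_qmm U M" "X \<in> Gs U M 0 j" shows "X = mat 1"
  using assms(2) Obs_nil[OF assms(1)] unfolding Gs_def by auto

lemma R4:
  assumes q: "is_qmm U M" and X: "X \<in> Gs U M (Suc l) (Suc j)"
  shows "X = mat 1 \<or> (\<exists>\<sigma> Y. Y \<in> Gs U M (Suc l) j \<and> X = Ad (U \<sigma>) Y)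
         \<or> (\<exists>g Y. Y \<in> Gs U M l j \<and> X = Ad (M g) Y)"
proof -
  obtain a S b where Y: "X = Obs (vop U M a S b)" "scheduler a S" "length b = length S"
    "length S \<le> Suc l" "length a + length S \<le> Suc j"
    using X unfolding Gs_def by blast
  show ?thesis
  proof (cases S)
    case Nil then show ?thesis using Y(1) Obs_nil[OF q] by simp
  next
    case (Cons s S')
    then obtain g b' where b: "b = g # b'" using Y(3) by (cases b) auto
    show ?thesis
    proof (cases "s = 0")
      case True
      have "X = Ad (M g) (Obs (vop U M a S' b'))"
        using Y(1) Cons b True by (simp add: vop_def matrix_mul_rid Obs_mult)
      moreover have "Obs (vop U M a S' b') \<in> Gs U M l j"
        using Y Cons b unfolding Gs_def scheduler_def
        by (intro CollectI exI[of _ a] exI[of _ S'] exI[of _ b']) auto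
      ultimately show ?thesis by blast
    next
      case False
      have ge: "\<forall>x\<in>set S. 1 \<le> x"
        using Y(2) Cons False unfolding scheduler_def by auto
      obtain \<sigma> a' where a: "a = \<sigma> # a'"
        using Y(2) Cons False unfolding scheduler_def by (cases a) auto
      define S'' where "S'' = map (\<lambda>x. x - 1) S"
      have SS: "map Suc S'' = S" unfolding S''_def using ge by (induction S) auto
      have "X = Ad (U \<sigma>) (Obs (vop U M a' S'' b))"
        using Y(1) a SS vop0_shift[of U M \<sigma> a' S'' b] by (simp add: vop_def Obs_mult)
      moreover have "scheduler a' S''"
        using Y(2) a unfolding scheduler_def S''_def
        by (auto simp: sorted_map elim: sorted_wrt_mono_rel[rotated])
      moreover have "Obs (vop U M a' S'' b) \<in> Gs U M (Suc l) j"
        using Y a calculation(2) unfolding Gs_def S''_def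
        by (intro CollectI exI[of _ a'] exI[of _ S''] exI[of _ b]) (auto simp: S''_def)
      ultimately show ?thesis by blast
    qed
  qed
qed

lemma Ad_linear: fixes A :: "'n::finite cmat" shows "linear (Ad A)"
proof (rule linearI)
  fix X Y :: "'n::finite cmat" and c :: real
  show "Ad A (X + Y) = Ad A X + Ad A Y"
    by (simp add: Ad_def matrix_matrix_mult_def vec_eq_iff sum.distrib distrib_left distrib_right)
  show "Ad A (c *\<^sub>R X) = c *\<^sub>R Ad A X"
    by (simp add: Ad_def matrix_matrix_mult_def vec_eq_iff scaleR_sum_right sum_distrib_right mult_scaleR_left)
qed

lemma Ad_span:
  assumes "Y \<in> span S" "Ad A ` S \<subseteq> T"
  shows "Ad A Y \<in> span T"
proof -
  have "Ad A Y \<in> Ad A ` span S" using assms(1) by blast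
  also have "\<dots> = span (Ad A ` S)" by (simp add: span_linear_image[OF Ad_linear])
  also have "\<dots> \<subseteq> span T" using assms(2) by (rule span_mono)
  finally show ?thesis .
qed

lemma st_lemma:
  assumes q: "is_qmm U M"
    and e1: "span (Gs U M (Suc l) j) = span (Gs U M (Suc l) (Suc j))"
    and e2: "span (Gs U M l j) = span (Gs U M l (Suc j))"
  shows "Gs U M (Suc l) (Suc (Suc j)) \<subseteq> span (Gs U M (Suc l) (Suc j))"
proof
  fix X assume X: "X \<in> Gs U M (Suc l) (Suc (Suc j))"
  from R4[OF q X] consider "X = mat 1"
    | \<sigma> Y where "Y \<in> Gs U M (Suc l) (Suc j)" "X = Ad (U \<sigma>) Y"
    | g Y where "Y \<in> Gs U M l (Suc j)" "X = Ad (M g) Y" by blast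
  then show "X \<in> span (Gs U M (Suc l) (Suc j))"
  proof cases
    case 1 then show ?thesis using R1 span_base by blast
  next
    case (2 \<sigma> Y)
    have "Y \<in> span (Gs U M (Suc l) j)" using 2(1) e1 span_base by blast
    moreover have "Ad (U \<sigma>) ` Gs U M (Suc l) j \<subseteq> Gs U M (Suc l) (Suc j)"
      unfolding image_subset_iff by (auto intro: R2)
    ultimately show ?thesis using Ad_span 2(2) by blast
  next
    case (3 g Y)
    have "Y \<in> span (Gs U M l j)" using 3(1) e2 span_base by blast
    moreover have "Ad (M g) ` Gs U M l j \<subseteq> Gs U M (Suc l) (Suc j)"
      unfolding image_subset_iff by (auto intro: R3)
    ultimately show ?thesis using Ad_span 3(2) by blast
  qed
qed

definition realm :: "'n::finite cmat \<Rightarrow> bool" where "realm A \<longleftrightarrow> (\<forall>i j. A $ i $ j \<in> \<real>)"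

lemma realm_mult: "realm A \<Longrightarrow> realm B \<Longrightarrow> realm (A ** B)"
  unfolding realm_def matrix_matrix_mult_def by (auto intro!: sum_in_Reals Reals_mult)

lemma realm_mat1: "realm (mat 1)"
  unfolding realm_def mat_def by auto

lemma realm_U_word: "(\<And>\<sigma>. realm (U \<sigma>)) \<Longrightarrow> realm (U_word U a)"
  by (induction a) (auto simp: U_word_Cons realm_mat1 realm_mult)

lemma realm_vop_aux:
  "(\<And>\<sigma>. realm (U \<sigma>)) \<Longrightarrow> (\<And>g. realm (M g)) \<Longrightarrow> realm (vop_aux U M a p S b)"
  by (induction U M a p S b rule: vop_aux.induct) (auto simp: realm_U_word realm_mult)

lemma realm_Obs:
  assumes "realm V"
  shows "realm (Obs V)" "\<And>i j. Obs V $ i $ j = Obs V $ j $ i"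
proof -
  have c: "cnj (V $ i $ j) = V $ i $ j" for i j using assms unfolding realm_def
    by (simp add: Reals_cnj_iff[symmetric])
  show "realm (Obs V)" using assms unfolding realm_def Obs_def cadj_def matrix_matrix_mult_def
    by (auto intro!: sum_in_Reals Reals_mult simp: c)
  show "Obs V $ i $ j = Obs V $ j $ i" for i j
    unfolding Obs_def cadj_def matrix_matrix_mult_def by (simp add: c mult.commute)
qed

definition Bmat :: "'n set \<Rightarrow> 'n::finite cmat" where
  "Bmat P = (\<chi> a b. if {a, b} = P then 1 else 0)"
definition Pairs :: "'n::finite set set" where "Pairs = {P. \<exists>a b. P = {a, b}}"

lemma finite_Pairs: "finite (Pairs :: 'n::finite set set)"
  by (rule finite_subset[of _ UNIV]) auto

lemma card_Pairs: "card (Pairs :: 'n::finite set set) \<le> CARD('n) * (CARD('n) + 1) div 2"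
proof -
  let ?A = "{B :: 'n set. B \<subseteq> UNIV \<and> card B = 1}" and ?B = "{B :: 'n set. B \<subseteq> UNIV \<and> card B = 2}"
  have "Pairs \<subseteq> ?A \<union> ?B"
  proof
    fix P :: "'n set" assume "P \<in> Pairs"
    then obtain a b where "P = {a, b}" unfolding Pairs_def by blast
    then show "P \<in> ?A \<union> ?B" by (cases "a = b") auto
  qed
  hence "card (Pairs :: 'n set set) \<le> card (?A \<union> ?B)" by (intro card_mono) auto
  also have "\<dots> \<le> card ?A + card ?B" by (rule card_Un_le)
  also have "\<dots> = CARD('n) + CARD('n) * (CARD('n) - 1) div 2"
    using n_subsets[of "UNIV::'n set" 1] n_subsets[of "UNIV::'n set" 2] by (simp add: choose_two)
  also have "\<dots> = CARD('n) * (CARD('n) + 1) div 2"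
  proof -
    have e: "CARD('n) * (CARD('n) + 1) = CARD('n) * (CARD('n) - 1) + 2 * CARD('n)"
      by (cases "CARD('n)") (auto simp: algebra_simps)
    show ?thesis unfolding e by simp
  qed
  finally show ?thesis .
qed

lemma sym_in_span:
  fixes X :: "'n::finite cmat"
  assumes r: "realm X" and s: "\<And>i j. X $ i $ j = X $ j $ i"
  shows "X \<in> span (Bmat ` Pairs)"
proof -
  define q where "q P = (SOME q. P = {fst q, snd q})" for P :: "'n set"
  define c where "c P = Re (X $ fst (q P) $ snd (q P))" for P
  have cab: "c {a, b} = Re (X $ a $ b)" for a b
  proof -
    have "\<exists>q. {a, b} = {fst q, snd q}" by (rule exI[of _ "(a, b)"]) simp
    then have "{a, b} = {fst (q {a, b}), snd (q {a, b})}" unfolding q_def by (rule someI_ex)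
    then have "(a = fst (q {a,b}) \<and> b = snd (q {a,b})) \<or> (a = snd (q {a,b}) \<and> b = fst (q {a,b}))"
      by (simp add: doubleton_eq_iff)
    then show ?thesis unfolding c_def using s by auto
  qed
  have "X = (\<Sum>P\<in>Pairs. c P *\<^sub>R Bmat P)"
    unfolding vec_eq_iff sum_component
  proof (intro allI)
    fix a b
    have "(\<Sum>P\<in>Pairs. (c P *\<^sub>R Bmat P) $ a $ b) = (\<Sum>P\<in>Pairs. if {a, b} = P then c P *\<^sub>R (1::complex) else 0)"
      by (intro sum.cong) (auto simp: Bmat_def)
    also have "\<dots> = c {a, b} *\<^sub>R (1::complex)"
    proof -
      have "{a, b} \<in> Pairs" by (auto simp: Pairs_def)
      then show ?thesis using finite_Pairs by (simp add: sum.delta')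
    qed
    also have "\<dots> = X $ a $ b" using r unfolding realm_def
      by (simp add: cab of_real_Re scaleR_conv_of_real)
    finally show "X $ a $ b = (\<Sum>P\<in>Pairs. (c P *\<^sub>R Bmat P) $ a $ b)" by (rule sym)
  qed
  also have "\<dots> \<in> span (Bmat ` Pairs)"
    by (intro span_sum span_scale span_base) auto
  finally show ?thesis .
qed

lemma dim_Gs:
  fixes U :: "'s \<Rightarrow> 'n::finite cmat" and M :: "'g::finite \<Rightarrow> 'n cmat"
  assumes "real_qmm U M"
  shows "dim (Gs U M l j) \<le> CARD('n) * (CARD('n) + 1) div 2"
proof -
  have rU: "realm (U \<sigma>)" for \<sigma> using assms unfolding real_qmm_def realm_def
    by (simp add: complex_is_Real_iff)
  have rM: "realm (M g)" for g using assms unfolding real_qmm_def realm_def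
    by (simp add: complex_is_Real_iff)
  have "Gs U M l j \<subseteq> span (Bmat ` Pairs)"
  proof
    fix X assume "X \<in> Gs U M l j"
    then obtain a S b where "X = Obs (vop U M a S b)"
      unfolding Gs_def by blast
    moreover have "realm (vop U M a S b)" unfolding vop_def by (rule realm_vop_aux[OF rU rM])
    ultimately obtain V where "X = Obs V" "realm V" by blast
    then show "X \<in> span (Bmat ` Pairs)" using sym_in_span realm_Obs by metis
  qed
  then have "dim (Gs U M l j) \<le> card (Bmat ` (Pairs :: 'n set set))"
    using finite_Pairs dim_le_card finite_imageI by metis
  also have "\<dots> \<le> card (Pairs :: 'n set set)" using finite_Pairs by (rule card_image_le)
  also have "\<dots> \<le> CARD('n) * (CARD('n) + 1) div 2" by (rule card_Pairs)
  finally show ?thesis .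
qed

lemma mat1_ne0: "(mat 1 :: 'n::finite cmat) \<noteq> 0"
proof
  assume "(mat 1 :: 'n cmat) = 0"
  then have "(mat 1 :: 'n cmat) $ undefined $ undefined = 0" by simp
  then show False by (simp add: mat_def)
qed

lemma key:
  fixes U :: "'s \<Rightarrow> 'n::finite cmat" and M :: "'g::finite \<Rightarrow> 'n cmat"
  assumes r: "real_qmm U M"
  shows "Gs U M l j \<subseteq> span (Gs U M l (CARD('n) * (CARD('n) + 1) div 2 - 1))"
proof (rule abstract_chain)
  have q: "is_qmm U M" using r unfolding real_qmm_def by simp
  show "Gs U M l j \<subseteq> Gs U M l (Suc j)" for l j unfolding Gs_def by force
  show "Gs U M l j \<subseteq> Gs U M (Suc l) j" for l j unfolding Gs_def by force
  show "Gs U M 0 j \<subseteq> span (Gs U M 0 0)" for j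
    using R0[OF q] R1[of U M 0 0] span_base by blast
  show "Gs U M (Suc l) (Suc (Suc j)) \<subseteq> span (Gs U M (Suc l) (Suc j))"
    if "span (Gs U M (Suc l) j) = span (Gs U M (Suc l) (Suc j))"
       "span (Gs U M l j) = span (Gs U M l (Suc j))" for l j
    by (rule st_lemma[OF q that])
  show "dim (Gs U M l j) \<le> CARD('n) * (CARD('n) + 1) div 2" for l j
    by (rule dim_Gs[OF r])
  show "1 \<le> dim (Gs U M l j)" for l j
  proof -
    have "dim {mat 1 :: 'n cmat} \<le> dim (Gs U M l j)"
      by (rule dim_subset) (use R1 in blast)
    moreover have "dim {mat 1 :: 'n cmat} = 1" using mat1_ne0 dim_singleton by simp
    ultimately show ?thesis by simp
  qed
qed

lemma prob_Obs: "prob U M \<rho> b a S = trace (Obs (vop U M a S b) ** \<rho>)"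
  unfolding prob_def Obs_def
  by (metis matrix_mul_assoc trace_mul_sym)

lemma tr_lin:
  fixes X Y A :: "'n::finite cmat"
  shows "trace ((c *\<^sub>R X + Y) ** A) = c *\<^sub>R trace (X ** A) + trace (Y ** A)"
  by (simp add: trace_def matrix_matrix_mult_def sum.distrib scaleR_sum_right distrib_right
      mult_scaleR_left)

lemma trace_vanish:
  fixes A B :: "'n::finite cmat"
  assumes "\<And>X. X \<in> S \<Longrightarrow> trace (X ** A) = trace (X ** B)" "Y \<in> span S"
  shows "trace (Y ** A) = trace (Y ** B)"
  using assms(2)
proof (induction rule: span_induct_alt)
  case base then show ?case by (simp add: trace_def matrix_matrix_mult_def)
next
  case (step c x y) then show ?case using assms(1) by (simp add: tr_lin)
qed

lemma part1:
  fixes U :: "'s::finite \<Rightarrow> 'n::finite cmat" and M :: "'g::finite \<Rightarrow> 'n cmat"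
  assumes r: "real_qmm U M"
  shows "sim_k U M k \<rho>s \<rho>t \<longleftrightarrow> sim_km U M k (CARD('n) * (CARD('n) + 1) div 2 - 1) \<rho>s \<rho>t"
proof
  assume "sim_k U M k \<rho>s \<rho>t"
  then show "sim_km U M k (CARD('n) * (CARD('n) + 1) div 2 - 1) \<rho>s \<rho>t"
    unfolding sim_k_def sim_km_def equiv_on_def by blast
next
  let ?m = "CARD('n) * (CARD('n) + 1) div 2 - 1"
  assume h: "sim_km U M k ?m \<rho>s \<rho>t"
  have van: "trace (X ** \<rho>s) = trace (X ** \<rho>t)" if "X \<in> Gs U M k ?m" for X
  proof -
    from that obtain a S b where X: "X = Obs (vop U M a S b)" "scheduler a S" "length b = length S"
      "length S \<le> k" "length a + length S \<le> ?m" unfolding Gs_def by blast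
    have "prob U M \<rho>s b a S = prob U M \<rho>t b a S"
      using h X unfolding sim_km_def equiv_on_def by blast
    then show ?thesis using X(1) by (simp add: prob_Obs)
  qed
  show "sim_k U M k \<rho>s \<rho>t"
    unfolding sim_k_def equiv_on_def
  proof (intro allI impI)
    fix a :: "'s list" and S :: "nat list" and b :: "'g list"
    assume a: "scheduler a S" "length b = length S" "length S \<le> k"
    have "Obs (vop U M a S b) \<in> Gs U M k (length a + length S)"
      using a unfolding Gs_def by blast
    then have inS: "Obs (vop U M a S b) \<in> span (Gs U M k ?m)" using key[OF r] by blast
    have "trace (Obs (vop U M a S b) ** \<rho>s) = trace (Obs (vop U M a S b) ** \<rho>t)"
      by (rule trace_vanish[OF van inS])
    then show "prob U M \<rho>s b a S = prob U M \<rho>t b a S" by (simp add: prob_Obs)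
  qed
qed

theorem mainTheorem2:
  fixes U :: "'s::finite \<Rightarrow> ('n::finite) cmat" and M :: "'g::finite \<Rightarrow> 'n cmat"
    and \<rho>s \<rho>t :: "'n cmat"
  assumes "real_qmm U M"
    and "density_op \<rho>s" and "density_op \<rho>t"
  shows "(\<forall>k::nat. sim_k U M k \<rho>s \<rho>t \<longleftrightarrow>
                    sim_km U M k (CARD('n) * (CARD('n) + 1) div 2 - 1) \<rho>s \<rho>t) \<and>
         (sim U M \<rho>s \<rho>t \<longleftrightarrow> sim_m U M (CARD('n) * (CARD('n) + 1) div 2 - 1) \<rho>s \<rho>t)"
proof (intro conjI allI iffI)
  let ?m = "CARD('n) * (CARD('n) + 1) div 2 - 1"
  fix k
  show "sim_k U M k \<rho>s \<rho>t" if "sim_km U M k ?m \<rho>s \<rho>t"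
    using part1[OF assms(1)] that by blast
  show "sim_km U M k ?m \<rho>s \<rho>t" if "sim_k U M k \<rho>s \<rho>t"
    using part1[OF assms(1)] that by blast
next
  let ?m = "CARD('n) * (CARD('n) + 1) div 2 - 1"
  show "sim_m U M ?m \<rho>s \<rho>t" if "sim U M \<rho>s \<rho>t"
    using that unfolding sim_def sim_m_def equiv_on_def by blast
  assume h: "sim_m U M ?m \<rho>s \<rho>t"
  show "sim U M \<rho>s \<rho>t"
    unfolding sim_def equiv_on_def
  proof (intro allI impI)
    fix a :: "'s list" and S :: "nat list" and b :: "'g list"
    assume a: "scheduler a S" "length b = length S" "True"
    have "sim_km U M (length S) ?m \<rho>s \<rho>t"
      using h unfolding sim_m_def sim_km_def equiv_on_def by blast
    then have "sim_k U M (length S) \<rho>s \<rho>t" using part1[OF assms(1)] by blast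
    then show "prob U M \<rho>s b a S = prob U M \<rho>t b a S"
      using a unfolding sim_k_def equiv_on_def by blast
  qed
qed


end
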